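(* Let $G$ be a connected simple graph on $n\geq 3$ vertices. Then $$\mathrm{v}(G)\leq \min\left\{\gamma_{e}(G),\left\lfloor\frac{n-1}{2}\right\rfloor\right\}.$$ Hence $\mathrm{v}(G)\leq \min\{m(G),\lfloor\frac{n-1}{2}\rfloor\}$.
   Context: For a simple graph $G$, $\mathrm{v}(G)$ denotes the v-number of the edge ideal $I(G)$; combinatorially, $\mathrm{v}(G)=\min\{|A| : A\subseteq V(G) \text{ is an independent set and } N_G(A) \text{ is a vertex cover of } G\}$, where $N_G(A)$ is the set of vertices adjacent to some vertex of $A$. (Equivalently, $\mathrm{v}(I)=\min\{\deg f : f \text{ homogeneous}, (I:f) \text{ prime}\}$.) A matching is a set of pairwise disjoint edges; $m(G)$ is the maximum size of a matching, and the edge domination number $\gamma_e(G)$ is the minimum size of a maximal (with respect to inclusion) matching of $G$. *)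

theory Defs
  imports Main
begin

definition simple_graph :: "'a set \<Rightarrow> 'a set set \<Rightarrow> bool" where
  "simple_graph V E \<longleftrightarrow> finite V \<and> (\<forall>e\<in>E. e \<subseteq> V \<and> card e = 2)"

definition adj :: "'a set set \<Rightarrow> 'a \<Rightarrow> 'a \<Rightarrow> bool" where
  "adj E u v \<longleftrightarrow> {u, v} \<in> E"

definition connected_graph :: "'a set \<Rightarrow> 'a set set \<Rightarrow> bool" where
  "connected_graph V E \<longleftrightarrow>
     (\<forall>u\<in>V. \<forall>v\<in>V. (adj E)\<^sup>*\<^sup>* u v)"

definition independent_set :: "'a set \<Rightarrow> 'a set set \<Rightarrow> 'a set \<Rightarrow> bool" where
  "independent_set V E A \<longleftrightarrow> A \<subseteq> V \<and> (\<forall>e\<in>E. \<not> e \<subseteq> A)"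

definition neighbourhood :: "'a set \<Rightarrow> 'a set set \<Rightarrow> 'a set \<Rightarrow> 'a set" where
  "neighbourhood V E A = {v \<in> V. \<exists>a\<in>A. adj E a v}"

definition vertex_cover :: "'a set \<Rightarrow> 'a set set \<Rightarrow> 'a set \<Rightarrow> bool" where
  "vertex_cover V E C \<longleftrightarrow> C \<subseteq> V \<and> (\<forall>e\<in>E. e \<inter> C \<noteq> {})"

text \<open>Combinatorial v-number of the edge ideal.\<close>
definition v_number :: "'a set \<Rightarrow> 'a set set \<Rightarrow> nat" where
  "v_number V E = Min {card A | A. independent_set V E A \<and> vertex_cover V E (neighbourhood V E A)}"

definition matching :: "'a set set \<Rightarrow> 'a set set \<Rightarrow> bool" where
  "matching E M \<longleftrightarrow> M \<subseteq> E \<and> (\<forall>e\<in>M. \<forall>f\<in>M. e \<noteq> f \<longrightarrow> e \<inter> f = {})"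

definition maximal_matching :: "'a set set \<Rightarrow> 'a set set \<Rightarrow> bool" where
  "maximal_matching E M \<longleftrightarrow> matching E M \<and> (\<forall>M'. matching E M' \<and> M \<subseteq> M' \<longrightarrow> M' = M)"

definition matching_number :: "'a set set \<Rightarrow> nat" where
  "matching_number E = Max {card M | M. matching E M}"

definition edge_domination_number :: "'a set set \<Rightarrow> nat" where
  "edge_domination_number E = Min {card M | M. maximal_matching E M}"

end

theory Submission
  imports Defs
begin

abbreviation cnb :: "'a set \<Rightarrow> 'a set set \<Rightarrow> 'a set \<Rightarrow> 'a set" where
  "cnb V E A \<equiv> A \<union> neighbourhood V E A"

lemma edge_decomp:
  assumes "simple_graph V E" "e \<in> E"
  shows "\<exists>x y. x \<noteq> y \<and> e = {x,y} \<and> x \<in> V \<and> y \<in> V"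
proof -
  have "e \<subseteq> V" "card e = 2" using assms unfolding simple_graph_def by auto
  then show ?thesis by (auto simp: card_2_iff)
qed

lemma adj_sym: "adj E x y = adj E y x"
  unfolding adj_def by (simp add: insert_commute)

lemma adj_neq:
  assumes "simple_graph V E" "adj E x y" shows "x \<noteq> y" "x \<in> V" "y \<in> V"
  using assms unfolding simple_graph_def adj_def by (auto dest!: bspec[where x="{x,y}"])

lemma indep_insert:
  assumes g: "simple_graph V E" and i: "independent_set V E A" and "u \<in> V" "u \<notin> A"
    and nu: "u \<notin> neighbourhood V E A"
  shows "independent_set V E (insert u A)"
  unfolding independent_set_def
proof (intro conjI ballI)
  show "insert u A \<subseteq> V" using i assms(3) unfolding independent_set_def by auto
next
  fix e assume e: "e \<in> E"
  show "\<not> e \<subseteq> insert u A"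
  proof
    assume sub: "e \<subseteq> insert u A"
    obtain x y where xy: "x \<noteq> y" "e = {x,y}" "x \<in> V" "y \<in> V"
      using edge_decomp[OF g e] by blast
    have "\<not> e \<subseteq> A" using i e unfolding independent_set_def by auto
    then have "u \<in> e" using sub by auto
    then obtain w where w: "e = {w,u}" "w \<noteq> u" using xy by auto
    then have "w \<in> A" using sub by auto
    moreover have "adj E w u" using w e unfolding adj_def by simp
    ultimately have "u \<in> neighbourhood V E A" using assms(3) unfolding neighbourhood_def by auto
    then show False using nu by simp
  qed
qed

lemma cnb_sub: "independent_set V E A \<Longrightarrow> cnb V E A \<subseteq> V"
  unfolding independent_set_def neighbourhood_def by blast

lemma nb_mono: "A \<subseteq> B \<Longrightarrow> neighbourhood V E A \<subseteq> neighbourhood V E B"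
  unfolding neighbourhood_def by auto

lemma cover_lemma:
  assumes g: "simple_graph V E" and i: "independent_set V E A"
    and c: "\<forall>e\<in>E. e \<inter> cnb V E A \<noteq> {}"
  shows "vertex_cover V E (neighbourhood V E A)"
  unfolding vertex_cover_def
proof (intro conjI ballI)
  show "neighbourhood V E A \<subseteq> V" unfolding neighbourhood_def by auto
next
  fix e assume e: "e \<in> E"
  obtain x y where xy: "x \<noteq> y" "e = {x,y}" "x \<in> V" "y \<in> V"
    using edge_decomp[OF g e] by blast
  have "adj E x y" "adj E y x" using e xy unfolding adj_def by (auto simp: insert_commute)
  obtain z where z: "z \<in> e" "z \<in> cnb V E A" using c e by blast
  show "e \<inter> neighbourhood V E A \<noteq> {}"
  proof (cases "z \<in> neighbourhood V E A")
    case True then show ?thesis using z by blast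
  next
    case False
    then have zA: "z \<in> A" using z by blast
    show ?thesis
    proof (cases "z = x")
      case True
      then have "y \<in> neighbourhood V E A" using zA xy \<open>adj E x y\<close> unfolding neighbourhood_def by blast
      then show ?thesis using xy by blast
    next
      case False
      then have "z = y" using z xy by blast
      then have "x \<in> neighbourhood V E A" using zA xy \<open>adj E y x\<close> unfolding neighbourhood_def by blast
      then show ?thesis using xy by blast
    qed
  qed
qed

lemma greedy_F:
  assumes g: "simple_graph V E"
  shows "finite F \<Longrightarrow> F \<subseteq> E \<Longrightarrow> \<exists>A. independent_set V E A \<and> card A \<le> card F \<and> \<Union>F \<subseteq> cnb V E A"
proof (induction F rule: finite_induct)
  case empty
  then show ?case using g by (intro exI[of _ "{}"]) (auto simp: independent_set_def simple_graph_def)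
next
  case (insert e F)
  then obtain A where A: "independent_set V E A" "card A \<le> card F" "\<Union>F \<subseteq> cnb V E A" by auto
  have cF: "card (insert e F) = Suc (card F)" using insert by simp
  have eE: "e \<in> E" using insert by auto
  obtain x y where xy: "x \<noteq> y" "e = {x,y}" "x \<in> V" "y \<in> V"
    using edge_decomp[OF g eE] by blast
  show ?case
  proof (cases "e \<subseteq> cnb V E A")
    case True
    then show ?thesis using A cF by (intro exI[of _ A]) auto
  next
    case False
    have "\<exists>u w. e = {u,w} \<and> u \<noteq> w \<and> u \<notin> cnb V E A \<and> u \<in> V \<and> w \<in> V"
    proof (cases "x \<in> cnb V E A")
      case True
      then have "y \<notin> cnb V E A" using False xy by auto
      then show ?thesis using xy by (intro exI[of _ y] exI[of _ x]) auto
    next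
      case False
      then show ?thesis using xy by (intro exI[of _ x] exI[of _ y]) auto
    qed
    then obtain u w where uw: "e = {u,w}" "u \<noteq> w" "u \<notin> cnb V E A" "u \<in> V" "w \<in> V"
      by blast
    have fA: "finite A" using A(1) g unfolding independent_set_def simple_graph_def
      using finite_subset by blast
    have i': "independent_set V E (insert u A)"
      using indep_insert[OF g A(1) uw(4)] uw(3) by auto
    have adj: "adj E u w" using eE uw unfolding adj_def by simp
    have "w \<in> neighbourhood V E (insert u A)" using adj uw unfolding neighbourhood_def by auto
    moreover have "cnb V E A \<subseteq> cnb V E (insert u A)" using nb_mono[of A "insert u A"] by auto
    ultimately have "\<Union>(insert e F) \<subseteq> cnb V E (insert u A)" using A(3) uw by auto
    moreover have "card (insert u A) \<le> card (insert e F)" using fA uw(3) A(2) cF by simp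
    ultimately show ?thesis using i' by blast
  qed
qed

lemma greedy_n:
  assumes g: "simple_graph V E"
  shows "\<forall>A. independent_set V E A \<longrightarrow> card (V - cnb V E A) = k \<longrightarrow>
    (\<exists>B. independent_set V E B \<and> (\<forall>e\<in>E. e \<inter> cnb V E B \<noteq> {}) \<and>
       int (card (cnb V E B)) - 2 * int (card B) \<ge> int (card (cnb V E A)) - 2 * int (card A))"
proof (induction k rule: less_induct)
  case (less k)
  show ?case
  proof (intro allI impI)
    fix A assume A: "independent_set V E A" "card (V - cnb V E A) = k"
    have fV: "finite V" using g unfolding simple_graph_def by auto
    have AV: "cnb V E A \<subseteq> V" using A(1) by (rule cnb_sub)
    have fA: "finite A" using A(1) fV unfolding independent_set_def using finite_subset by blast
    show "\<exists>B. independent_set V E B \<and> (\<forall>e\<in>E. e \<inter> cnb V E B \<noteq> {}) \<and>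
       int (card (cnb V E B)) - 2 * int (card B) \<ge> int (card (cnb V E A)) - 2 * int (card A)"
    proof (cases "\<forall>e\<in>E. e \<inter> cnb V E A \<noteq> {}")
      case True
      then show ?thesis using A by blast
    next
      case False
      then obtain e where eE: "e \<in> E" and ed: "e \<inter> cnb V E A = {}" by blast
      obtain u w where uw: "u \<noteq> w" "e = {u,w}" "u \<in> V" "w \<in> V"
        using edge_decomp[OF g eE] by blast
      let ?A = "insert u A"
      have i': "independent_set V E ?A"
        using indep_insert[OF g A(1) uw(3)] ed uw by auto
      have adj: "adj E u w" using eE uw unfolding adj_def by simp
      have "w \<in> neighbourhood V E ?A" using adj uw unfolding neighbourhood_def by auto
      moreover have "cnb V E A \<subseteq> cnb V E ?A" using nb_mono[of A ?A] by auto
      ultimately have sub: "cnb V E A \<union> {u,w} \<subseteq> cnb V E ?A" by auto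
      have AV': "cnb V E ?A \<subseteq> V" using i' by (rule cnb_sub)
      have fin': "finite (cnb V E ?A)" using AV' fV by (rule finite_subset)
      have fcA: "finite (cnb V E A)" using AV fV by (rule finite_subset)
      have dj: "cnb V E A \<inter> {u,w} = {}" using ed uw(2) by blast
      have "card (cnb V E A \<union> {u,w}) = card (cnb V E A) + card {u,w}"
        using card_Un_disjoint[OF fcA _ dj] by simp
      then have "card (cnb V E A \<union> {u,w}) = card (cnb V E A) + 2" using uw(1) by simp
      then have c1: "card (cnb V E ?A) \<ge> card (cnb V E A) + 2"
        using card_mono[OF fin' sub] by simp
      have c2: "card ?A = card A + 1" using fA ed uw by auto
      have "V - cnb V E ?A \<subset> V - cnb V E A" using sub AV uw ed by auto
      then have "card (V - cnb V E ?A) < k" using A(2) fV by (metis finite_Diff psubset_card_mono)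
      then obtain B where B: "independent_set V E B" "\<forall>e\<in>E. e \<inter> cnb V E B \<noteq> {}"
        "int (card (cnb V E B)) - 2 * int (card B) \<ge> int (card (cnb V E ?A)) - 2 * int (card ?A)"
        using less i' by blast
      then show ?thesis using c1 c2 by (intro exI[of _ B]) auto
    qed
  qed
qed

lemma deg2:
  assumes g: "simple_graph V E" and c: "connected_graph V E" and n: "card V \<ge> 3"
  shows "\<exists>x y z. y \<noteq> z \<and> adj E x y \<and> adj E x z"
proof (rule ccontr)
  assume "\<not> ?thesis"
  then have uniq: "\<And>x y z. adj E x y \<Longrightarrow> adj E x z \<Longrightarrow> y = z" by blast
  obtain T where T: "T \<subseteq> V" "card T = 3" using obtain_subset_with_card_n[OF n] by blast
  then obtain a b d where abd: "T = {a,b,d}" "a \<noteq> b" "b \<noteq> d" "a \<noteq> d" by (auto simp: card_3_iff)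
  have cl: "(adj E)\<^sup>*\<^sup>* a z \<Longrightarrow> z = a \<or> adj E a z" for z
  proof (induction rule: rtranclp_induct)
    case base then show ?case by simp
  next
    case (step y z)
    from step(3) show ?case
    proof
      assume "y = a" then show ?thesis using step by simp
    next
      assume "adj E a y"
      then have "adj E y a" by (simp add: adj_sym)
      then have "z = a" using uniq step(2) by blast
      then show ?thesis by simp
    qed
  qed
  have "(adj E)\<^sup>*\<^sup>* a b" "(adj E)\<^sup>*\<^sup>* a d" using c T abd unfolding connected_graph_def by auto
  then have "adj E a b" "adj E a d" using cl abd by auto
  then show False using uniq abd by blast
qed

lemma finite_vset:
  assumes g: "simple_graph V E"
  shows "finite {card A | A. independent_set V E A \<and> vertex_cover V E (neighbourhood V E A)}"
proof -
  have fV: "finite V" using g unfolding simple_graph_def by auto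
  have "{card A | A. independent_set V E A \<and> vertex_cover V E (neighbourhood V E A)} \<subseteq> card ` Pow V"
    unfolding independent_set_def by auto
  then show ?thesis using fV finite_subset by blast
qed

lemma v_le:
  assumes g: "simple_graph V E" and i: "independent_set V E A"
    and c: "\<forall>e\<in>E. e \<inter> cnb V E A \<noteq> {}"
  shows "v_number V E \<le> card A"
  unfolding v_number_def
  using cover_lemma[OF g i c] i by (intro Min_le finite_vset[OF g]) auto

lemma v_le_matching:
  assumes g: "simple_graph V E" and m: "maximal_matching E M"
  shows "v_number V E \<le> card M"
proof -
  have fV: "finite V" using g unfolding simple_graph_def by auto
  have "E \<subseteq> Pow V" using g unfolding simple_graph_def by auto
  then have fE: "finite E" using fV finite_subset by (metis finite_Pow_iff)
  have ME: "M \<subseteq> E" using m unfolding maximal_matching_def matching_def by auto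
  then have fM: "finite M" using fE finite_subset by blast
  obtain A where A: "independent_set V E A" "card A \<le> card M" "\<Union>M \<subseteq> cnb V E A"
    using greedy_F[OF g fM ME] by blast
  have "\<forall>e\<in>E. e \<inter> \<Union>M \<noteq> {}"
  proof
    fix e assume e: "e \<in> E"
    show "e \<inter> \<Union>M \<noteq> {}"
    proof
      assume d: "e \<inter> \<Union>M = {}"
      have "e \<noteq> {}" using e g unfolding simple_graph_def by (auto)
      then have "e \<notin> M" using d by auto
      have "matching E (insert e M)" using m e d unfolding maximal_matching_def matching_def by auto
      then have "insert e M = M" using m unfolding maximal_matching_def by blast
      then show False using \<open>e \<notin> M\<close> by auto
    qed
  qed
  then have "\<forall>e\<in>E. e \<inter> cnb V E A \<noteq> {}" using A(3) by blast
  then show ?thesis using v_le[OF g A(1)] A(2) by simp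
qed

theorem proposition3p2:
  fixes V :: "'a set" and E :: "'a set set"
  assumes "simple_graph V E" and "connected_graph V E" and "card V \<ge> 3"
  shows "v_number V E \<le> min (edge_domination_number E) ((card V - 1) div 2)
         \<and> v_number V E \<le> min (matching_number E) ((card V - 1) div 2)"
proof -
  note g = assms(1)
  have fV: "finite V" using g unfolding simple_graph_def by auto
  have "E \<subseteq> Pow V" using g unfolding simple_graph_def by auto
  then have fE: "finite E" using fV finite_subset by (metis finite_Pow_iff)
  obtain x y z where xyz: "y \<noteq> z" "adj E x y" "adj E x z" using deg2[OF assms] by blast
  have xV: "x \<in> V" "y \<in> V" "z \<in> V" "x \<noteq> y" "x \<noteq> z" using adj_neq[OF g xyz(2)] adj_neq[OF g xyz(3)] by auto
  have i0: "independent_set V E {x}"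
    unfolding independent_set_def
  proof (intro conjI ballI)
    show "{x} \<subseteq> V" using xV by simp
  next
    fix e assume e: "e \<in> E"
    obtain p q where "p \<noteq> q" "e = {p,q}" using edge_decomp[OF g e] by blast
    then show "\<not> e \<subseteq> {x}" by auto
  qed
  have "{x,y,z} \<subseteq> cnb V E {x}" using xV xyz unfolding neighbourhood_def by auto
  moreover have "cnb V E {x} \<subseteq> V" using xV unfolding neighbourhood_def by auto
  ultimately have c0: "card (cnb V E {x}) \<ge> 3"
    using card_mono[of "cnb V E {x}" "{x,y,z}"] fV finite_subset xV xyz(1) by fastforce
  obtain B where B: "independent_set V E B" "\<forall>e\<in>E. e \<inter> cnb V E B \<noteq> {}"
    "int (card (cnb V E B)) - 2 * int (card B) \<ge> int (card (cnb V E {x})) - 2 * int (card {x})"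
    using greedy_n[OF g] i0 by blast
  have "cnb V E B \<subseteq> V" using B(1) by (rule cnb_sub)
  then have "card (cnb V E B) \<le> card V" using fV card_mono by blast
  then have "card B \<le> (card V - 1) div 2" using B(3) c0 by simp
  then have b1: "v_number V E \<le> (card V - 1) div 2" using v_le[OF g B(1) B(2)] by simp
  let ?S = "{card M | M. matching E M}"
  have fS: "finite ?S"
  proof -
    have "?S \<subseteq> card ` Pow E" unfolding matching_def by auto
    then show ?thesis using fE finite_subset by blast
  qed
  have "{} \<in> {M. matching E M}" unfolding matching_def by auto
  then have "?S \<noteq> {}" by blast
  then have "matching_number E \<in> ?S" unfolding matching_number_def using fS Max_in by blast
  then obtain M0 where M0: "matching E M0" "card M0 = matching_number E" by auto
  have mm0: "maximal_matching E M0"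
    unfolding maximal_matching_def
  proof (intro conjI allI impI)
    show "matching E M0" by fact
    fix M' assume M': "matching E M' \<and> M0 \<subseteq> M'"
    have fM': "finite M'" using M' fE unfolding matching_def using finite_subset by blast
    have "card M' \<le> matching_number E" unfolding matching_number_def using M' fS by (intro Max_ge) auto
    moreover have "card M0 \<le> card M'" using M' fM' card_mono by blast
    ultimately have "card M0 = card M'" using M0 by simp
    then have "M0 = M'" using card_subset_eq[OF fM'] M' by blast
    then show "M' = M0" by simp
  qed
  have b3: "v_number V E \<le> matching_number E" using v_le_matching[OF g mm0] M0 by simp
  let ?T = "{card M | M. maximal_matching E M}"
  have fT: "finite ?T"
  proof -
    have "?T \<subseteq> card ` Pow E" unfolding maximal_matching_def matching_def by auto
    then show ?thesis using fE finite_subset by blast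
  qed
  have "?T \<noteq> {}" using mm0 by blast
  then have "edge_domination_number E \<in> ?T" unfolding edge_domination_number_def using fT Min_in by blast
  then obtain M1 where M1: "maximal_matching E M1" "card M1 = edge_domination_number E" by auto
  have b2: "v_number V E \<le> edge_domination_number E" using v_le_matching[OF g M1(1)] M1 by simp
  show ?thesis using b1 b2 b3 by simp
qed

end
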